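(* For fixed $k \in \mathbb{N}$, fixed information resource $f$, and decomposable probability-of-success metric $\phi$, define \[ \tau = \{T \mid T \subseteq \Omega, |T| = k\}, \quad \tau_{q_{\text{min}}} = \{T \mid T \subseteq \Omega, |T| = k, \phi(T,f) \geq q_{\text{min}} \}. \] Then \[ \frac{|\tau_{q_{\text{min}}}|}{|\tau|} \leq \frac{p}{q_{\text{min}}}, \] where $p = \frac{k}{|\Omega|}$.
   Context: Algorithmic search framework: finite discrete search space $\Omega$, target sets $T\subseteq\Omega$ with indicator vectors $\mathbf{t}$, information resource $f$, and a fixed search algorithm. A probability-of-success metric $\phi$ is decomposable if there exists a probability vector $\mathbf{P}_{\phi,f}$ over $\Omega$, not a function of the target, with $\phi(t,f)=\mathbf{t}^{\top}\mathbf{P}_{\phi,f}=P_\phi(X\in t\mid f)$. $q_{\text{min}}\in(0,1]$ is a success threshold. *)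

theory Defs
  imports "HOL-Analysis.Analysis"
begin

definition prob_vector :: "('a::finite \<Rightarrow> real) \<Rightarrow> bool" where
  "prob_vector P \<longleftrightarrow> (\<forall>x. 0 \<le> P x) \<and> (\<Sum>x\<in>UNIV. P x) = 1"

text \<open>phi is decomposable (for information resource f): there is a probability
vector P over Omega, independent of the target, with phi(T,f) = t^T P = sum of P over T.\<close>
definition decomposable :: "('a::finite set \<Rightarrow> 'f \<Rightarrow> real) \<Rightarrow> 'f \<Rightarrow> bool" where
  "decomposable phi f \<longleftrightarrow> (\<exists>P. prob_vector P \<and> (\<forall>T. phi T f = (\<Sum>x\<in>T. P x)))"

end

theory Submission
  imports Defs
begin

lemma card_tau:
  "card {T :: 'a::finite set. card T = k} = CARD('a) choose k"
  using n_subsets[of "UNIV :: 'a set" k] by simp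

lemma card_tau_x:
  assumes "k > 0"
  shows "card {T :: 'a::finite set. card T = k \<and> x \<in> T} = (CARD('a) - 1) choose (k - 1)"
proof -
  have eq: "{T :: 'a set. card T = k \<and> x \<in> T} = insert x ` {B. B \<subseteq> UNIV - {x} \<and> card B = k - 1}"
  proof (rule set_eqI, rule iffI)
    fix T :: "'a set" assume "T \<in> {T. card T = k \<and> x \<in> T}"
    then have T: "card T = k" "x \<in> T" by auto
    then have "T = insert x (T - {x})" by auto
    moreover have "card (T - {x}) = k - 1" using T by simp
    ultimately show "T \<in> insert x ` {B. B \<subseteq> UNIV - {x} \<and> card B = k - 1}" by blast
  next
    fix T :: "'a set" assume "T \<in> insert x ` {B. B \<subseteq> UNIV - {x} \<and> card B = k - 1}"
    then obtain B where B: "B \<subseteq> UNIV - {x}" "card B = k - 1" "T = insert x B" by auto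
    then have "card T = k" using assms by (simp add: card_insert_if) (auto)
    then show "T \<in> {T. card T = k \<and> x \<in> T}" using B by auto
  qed
  have inj: "inj_on (insert x) {B. B \<subseteq> UNIV - {x} \<and> card B = k - 1}"
    by (rule inj_onI) (auto simp: insert_ident)
  have "card {T :: 'a set. card T = k \<and> x \<in> T} = card {B. B \<subseteq> UNIV - {x} \<and> card B = k - 1}"
    unfolding eq by (rule card_image[OF inj])
  also have "\<dots> = card (UNIV - {x} :: 'a set) choose (k - 1)"
    by (rule n_subsets) simp
  also have "card (UNIV - {x} :: 'a set) = CARD('a) - 1"
    by (simp add: card_Diff_singleton)
  finally show ?thesis .
qed

theorem theorem3:
  fixes phi :: "'a::finite set \<Rightarrow> 'f \<Rightarrow> real" and f :: 'f and k :: nat and qmin :: real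
  assumes "decomposable phi f"
    and "0 < qmin" and "qmin \<le> 1"
  shows "real (card {T :: 'a set. card T = k \<and> phi T f \<ge> qmin})
           / real (card {T :: 'a set. card T = k})
         \<le> (real k / real CARD('a)) / qmin"
proof -
  obtain P where Pv: "prob_vector P" and phiP: "\<And>T. phi T f = (\<Sum>x\<in>T. P x)"
    using assms(1) unfolding decomposable_def by blast
  have P0: "\<And>x. 0 \<le> P x" and P1: "(\<Sum>x\<in>UNIV. P x) = 1" using Pv unfolding prob_vector_def by auto
  define tau where "tau = {T :: 'a set. card T = k}"
  define tq where "tq = {T :: 'a set. card T = k \<and> phi T f \<ge> qmin}"
  define N where "N = CARD('a)"
  have rhs0: "0 \<le> (real k / real N) / qmin" using assms(2) by simp
  show ?thesis
  proof (cases "k = 0 \<or> k > N")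
    case True
    have "tq = {}"
    proof (cases "k = 0")
      case True
      then show ?thesis unfolding tq_def using phiP assms(2) by auto
    next
      case False
      then have "k > N" using \<open>k = 0 \<or> k > N\<close> by simp
      have "card T \<le> N" for T :: "'a set" unfolding N_def by (rule card_mono) auto
      then show ?thesis unfolding tq_def using \<open>k > N\<close> by (auto simp: not_le[symmetric])
    qed
    then have "card tq = 0" by simp
    then have "real (card tq) / real (card tau) \<le> (real k / real N) / qmin" using rhs0 by simp
    then show ?thesis unfolding tq_def tau_def N_def .
  next
    case False
    then have k: "0 < k" "k \<le> N" by auto
    have S: "(\<Sum>T\<in>tau. phi T f) = real ((N - 1) choose (k - 1))"
    proof -
      have "(\<Sum>T\<in>tau. phi T f) = (\<Sum>T\<in>tau. \<Sum>x\<in>UNIV. if x \<in> T then P x else 0)"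
        by (simp add: phiP sum.If_cases)
      also have "\<dots> = (\<Sum>x\<in>UNIV. \<Sum>T\<in>tau. if x \<in> T then P x else 0)"
        by (rule sum.swap)
      also have "\<dots> = (\<Sum>x\<in>UNIV. P x * real (card {T \<in> tau. x \<in> T}))"
        by (simp add: sum.If_cases mult.commute Int_def conj_commute)
      also have "\<dots> = (\<Sum>x\<in>UNIV. P x * real ((N - 1) choose (k - 1)))"
      proof (rule sum.cong[OF refl])
        fix x :: 'a
        have "{T \<in> tau. x \<in> T} = {T. card T = k \<and> x \<in> T}" unfolding tau_def by auto
        then show "P x * real (card {T \<in> tau. x \<in> T}) = P x * real ((N - 1) choose (k - 1))"
          using card_tau_x[OF k(1), of x] unfolding N_def by simp
      qed
      also have "\<dots> = real ((N - 1) choose (k - 1))"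
        by (simp add: sum_distrib_right[symmetric] P1)
      finally show ?thesis .
    qed
    have ct: "card tau = N choose k" unfolding tau_def N_def by (rule card_tau)
    have Npos: "0 < N" using k by simp
    have ctpos: "0 < card tau" using ct k by simp
    have sub: "tq \<subseteq> tau" unfolding tq_def tau_def by auto
    have "qmin * real (card tq) = (\<Sum>T\<in>tq. qmin)" by simp
    also have "\<dots> \<le> (\<Sum>T\<in>tq. phi T f)"
      by (rule sum_mono) (simp add: tq_def)
    also have "\<dots> \<le> (\<Sum>T\<in>tau. phi T f)"
      by (rule sum_mono2[OF _ sub]) (auto simp: phiP P0 sum_nonneg)
    finally have M: "qmin * real (card tq) \<le> real ((N - 1) choose (k - 1))" using S by simp
    have B: "real k * real (N choose k) = real N * real ((N - 1) choose (k - 1))"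
      using times_binomial_minus1_eq[OF k(1), of N] by (metis of_nat_mult)
    have "real (card tq) / real (card tau) \<le> (real k / real N) / qmin"
    proof -
      have "real (card tq) * (real N * qmin) \<le> real ((N - 1) choose (k - 1)) * real N"
        using M Npos by (simp add: algebra_simps)
      also have "\<dots> = real k * real (card tau)" using B ct by simp
      finally show ?thesis using Npos ctpos assms(2)
        by (simp add: divide_simps algebra_simps)
    qed
    then show ?thesis unfolding tq_def tau_def N_def .
  qed
qed

end
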